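(* Let $\Phi$ be a Følner sequence in $\mathbb{N}$ and let $j\mapsto f_j$ be a sequence in $L^2(\mathbb{N},\Phi)$ that is Cauchy with respect to $\|\cdot\|_\Phi$. Then there exist a subsequence $\Psi$ of $\Phi$ and $f\in L^2(\mathbb{N},\Psi)$ such that $\|f-f_j\|_\Psi\to0$ as $j\to\infty$. Moreover, if all the $f_j$ take values in an interval $[a,b]$, then so does $f$.
   Context: A Følner sequence in $\mathbb{N}$ is a sequence $\Phi\colon N\mapsto\Phi_N$ of finite non-empty subsets of $\mathbb{N}$ with $|(\Phi_N+m)\triangle\Phi_N|/|\Phi_N|\to0$ for all $m\in\mathbb{N}$. The Besicovitch seminorm is $\|f\|_\Phi=\big(\limsup_{N\to\infty}\frac{1}{|\Phi_N|}\sum_{n\in\Phi_N}|f(n)|^2\big)^{1/2}$ and $L^2(\mathbb{N},\Phi)=\{f\colon\mathbb{N}\to\mathbb{C}:\|f\|_\Phi<\infty\}$. A sequence $(f_j)$ is Cauchy with respect to $\|\cdot\|_\Phi$ if for every $\epsilon>0$ there is $N$ with $\|f_k-f_j\|_\Phi\le\epsilon$ for all $j,k\ge N$. *)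

theory Defs
  imports "HOL-Analysis.Analysis" "HOL-Library.Liminf_Limsup"
begin

definition folner :: "(nat \<Rightarrow> nat set) \<Rightarrow> bool" where
  "folner \<Phi> \<longleftrightarrow> (\<forall>N. finite (\<Phi> N) \<and> \<Phi> N \<noteq> {}) \<and>
     (\<forall>m::nat. (\<lambda>N. real (card ((((\<lambda>n. n + m) ` \<Phi> N) - \<Phi> N) \<union> (\<Phi> N - ((\<lambda>n. n + m) ` \<Phi> N))))
                    / real (card (\<Phi> N))) \<longlonglongrightarrow> 0)"

definition besic_sq :: "(nat \<Rightarrow> nat set) \<Rightarrow> (nat \<Rightarrow> complex) \<Rightarrow> ereal" where
  "besic_sq \<Phi> f = limsup (\<lambda>N. ereal ((\<Sum>n\<in>\<Phi> N. (cmod (f n))\<^sup>2) / real (card (\<Phi> N))))"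

definition L2 :: "(nat \<Rightarrow> nat set) \<Rightarrow> (nat \<Rightarrow> complex) set" where
  "L2 \<Phi> = {f. besic_sq \<Phi> f < \<infinity>}"

text \<open>Besicovitch seminorm; only used for functions in L2, where the limsup is finite.\<close>
definition besic_norm :: "(nat \<Rightarrow> nat set) \<Rightarrow> (nat \<Rightarrow> complex) \<Rightarrow> real" where
  "besic_norm \<Phi> f = sqrt (real_of_ereal (besic_sq \<Phi> f))"

definition besic_cauchy :: "(nat \<Rightarrow> nat set) \<Rightarrow> (nat \<Rightarrow> nat \<Rightarrow> complex) \<Rightarrow> bool" where
  "besic_cauchy \<Phi> F \<longleftrightarrow> (\<forall>\<epsilon>>0. \<exists>N. \<forall>j\<ge>N. \<forall>k\<ge>N. besic_norm \<Phi> (\<lambda>n. F k n - F j n) \<le> \<epsilon>)"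

end

theory Submission
  imports Defs
begin

definition avg :: "(nat \<Rightarrow> nat set) \<Rightarrow> (nat \<Rightarrow> complex) \<Rightarrow> nat \<Rightarrow> real" where
  "avg \<Psi> g N = (\<Sum>n\<in>\<Psi> N. (cmod (g n))\<^sup>2) / real (card (\<Psi> N))"

lemma besic_sq_avg: "besic_sq \<Psi> g = limsup (\<lambda>N. ereal (avg \<Psi> g N))"
  by (simp add: besic_sq_def avg_def)

lemma avg_nonneg: "0 \<le> avg \<Psi> g N"
  by (simp add: avg_def sum_nonneg divide_nonneg_nonneg)

lemma besic_sq_nonneg: "0 \<le> besic_sq \<Psi> g"
  unfolding besic_sq_avg
  by (rule le_Limsup) (auto simp: avg_nonneg)

lemma besic_sq_le:
  assumes "eventually (\<lambda>N. avg \<Psi> g N \<le> C) sequentially"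
  shows "besic_sq \<Psi> g \<le> ereal C"
  unfolding besic_sq_avg
  by (rule Limsup_bounded) (use assms in \<open>auto elim: eventually_mono\<close>)

lemma L2_I:
  assumes "eventually (\<lambda>N. avg \<Psi> g N \<le> C) sequentially"
  shows "g \<in> L2 \<Psi>"
proof -
  have "ereal C < \<infinity>" by simp
  then show ?thesis using besic_sq_le[OF assms] unfolding L2_def
    using le_less_trans by blast
qed

lemma L2_finite:
  assumes "g \<in> L2 \<Psi>"
  shows "besic_sq \<Psi> g = ereal (real_of_ereal (besic_sq \<Psi> g))"
  using assms besic_sq_nonneg[of \<Psi> g] unfolding L2_def
  by (cases "besic_sq \<Psi> g") auto

lemma L2_approx:
  assumes "g \<in> L2 \<Psi>" "\<delta> > 0"
  shows "eventually (\<lambda>N. avg \<Psi> g N \<le> real_of_ereal (besic_sq \<Psi> g) + \<delta>) sequentially"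
proof -
  obtain L where L: "besic_sq \<Psi> g = ereal L" using L2_finite[OF assms(1)] by blast
  have "besic_sq \<Psi> g < ereal (real_of_ereal (besic_sq \<Psi> g) + \<delta>)"
    using assms(2) by (simp add: L)
  then have "eventually (\<lambda>N. ereal (avg \<Psi> g N) < ereal (real_of_ereal (besic_sq \<Psi> g) + \<delta>)) sequentially"
    unfolding besic_sq_avg by (rule Limsup_lessD)
  then show ?thesis by (auto elim: eventually_mono)
qed

lemma L2_bound:
  assumes "g \<in> L2 \<Psi>"
  shows "\<exists>C. eventually (\<lambda>N. avg \<Psi> g N \<le> C) sequentially"
  using L2_approx[OF assms zero_less_one] by blast

lemma sq_add_le: "(cmod (a + b))\<^sup>2 \<le> 2 * (cmod a)\<^sup>2 + 2 * (cmod b)\<^sup>2"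
proof -
  have "cmod (a + b) \<le> cmod a + cmod b" by (rule norm_triangle_ineq)
  then have "(cmod (a + b))\<^sup>2 \<le> (cmod a + cmod b)\<^sup>2"
    by (simp add: power_mono)
  also have "\<dots> \<le> 2 * (cmod a)\<^sup>2 + 2 * (cmod b)\<^sup>2"
  proof -
    have "0 \<le> (cmod a - cmod b)\<^sup>2" by simp
    then show ?thesis unfolding power2_diff power2_sum by linarith
  qed
  finally show ?thesis .
qed

lemma avg_add: "avg \<Psi> (\<lambda>n. g n + h n) N \<le> 2 * avg \<Psi> g N + 2 * avg \<Psi> h N"
proof -
  have "(\<Sum>n\<in>\<Psi> N. (cmod (g n + h n))\<^sup>2) \<le> (\<Sum>n\<in>\<Psi> N. 2 * (cmod (g n))\<^sup>2 + 2 * (cmod (h n))\<^sup>2)"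
    by (rule sum_mono) (rule sq_add_le)
  also have "\<dots> = 2 * (\<Sum>n\<in>\<Psi> N. (cmod (g n))\<^sup>2) + 2 * (\<Sum>n\<in>\<Psi> N. (cmod (h n))\<^sup>2)"
    by (simp add: sum.distrib sum_distrib_left)
  finally show ?thesis
    unfolding avg_def by (simp add: divide_right_mono add_divide_distrib[symmetric])
qed

lemma avg_diff: "avg \<Psi> (\<lambda>n. g n - h n) N \<le> 2 * avg \<Psi> g N + 2 * avg \<Psi> h N"
  using avg_add[of \<Psi> g "\<lambda>n. - h n" N] by (simp add: avg_def)

lemma L2_diff:
  assumes "g \<in> L2 \<Psi>" "h \<in> L2 \<Psi>"
  shows "(\<lambda>n. g n - h n) \<in> L2 \<Psi>"
proof -
  obtain C1 C2 where "eventually (\<lambda>N. avg \<Psi> g N \<le> C1) sequentially"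
    "eventually (\<lambda>N. avg \<Psi> h N \<le> C2) sequentially"
    using L2_bound assms by blast
  then have "eventually (\<lambda>N. avg \<Psi> (\<lambda>n. g n - h n) N \<le> 2*C1 + 2*C2) sequentially"
    apply eventually_elim
    subgoal for N using avg_diff[of \<Psi> g h N] by linarith
    done
  then show ?thesis by (rule L2_I)
qed

lemma norm_sq:
  assumes "g \<in> L2 \<Psi>"
  shows "(besic_norm \<Psi> g)\<^sup>2 = real_of_ereal (besic_sq \<Psi> g)"
  using besic_sq_nonneg[of \<Psi> g] unfolding besic_norm_def
  by (simp add: real_of_ereal_pos)

lemma folner_card:
  assumes "folner \<Phi>"
  shows "(\<lambda>N. 1 / real (card (\<Phi> N))) \<longlonglongrightarrow> 0"
proof -
  let ?r = "\<lambda>N. real (card ((((\<lambda>n. n + 1) ` \<Phi> N) - \<Phi> N) \<union> (\<Phi> N - ((\<lambda>n. n + 1) ` \<Phi> N))))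
                    / real (card (\<Phi> N))"
  have r: "?r \<longlonglongrightarrow> 0" using assms unfolding folner_def by blast
  have le: "1 / real (card (\<Phi> N)) \<le> ?r N" for N
  proof -
    have fin: "finite (\<Phi> N)" "\<Phi> N \<noteq> {}" using assms unfolding folner_def by auto
    let ?m = "Max (\<Phi> N)"
    have "Suc ?m \<notin> \<Phi> N" using Max_ge[OF fin(1)] by fastforce
    moreover have "?m \<in> \<Phi> N" using fin by (rule Max_in)
    ultimately have "?m + 1 \<in> ((\<lambda>n. n + 1) ` \<Phi> N) - \<Phi> N"
      by auto
    let ?D = "(((\<lambda>n. n + 1) ` \<Phi> N) - \<Phi> N) \<union> (\<Phi> N - ((\<lambda>n. n + 1) ` \<Phi> N))"
    have "?D \<noteq> {}" using \<open>?m + 1 \<in> _\<close> by blast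
    moreover have "finite ?D" using fin by auto
    ultimately have "1 \<le> card ?D"
      by (metis One_nat_def Suc_le_eq card_gt_0_iff)
    then show ?thesis by (simp add: divide_right_mono)
  qed
  show ?thesis
    apply (rule tendsto_sandwich[OF _ _ tendsto_const r])
     apply simp
    apply (rule always_eventually)
    using le by blast
qed

theorem proposition3p1:
  fixes \<Phi> :: "nat \<Rightarrow> nat set" and F :: "nat \<Rightarrow> nat \<Rightarrow> complex"
  assumes "folner \<Phi>"
    and "\<And>j. F j \<in> L2 \<Phi>"
    and "besic_cauchy \<Phi> F"
  shows "\<exists>\<sigma> :: nat \<Rightarrow> nat. \<exists>f :: nat \<Rightarrow> complex.
           strict_mono \<sigma> \<and> f \<in> L2 (\<Phi> \<circ> \<sigma>) \<and>
           (\<lambda>j. besic_norm (\<Phi> \<circ> \<sigma>) (\<lambda>n. f n - F j n)) \<longlonglongrightarrow> 0 \<and>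
           (\<forall>a b :: real. (\<forall>j n. F j n \<in> complex_of_real ` {a..b}) \<longrightarrow>
                (\<forall>n. f n \<in> complex_of_real ` {a..b}))"
proof -
  have fin: "\<And>N. finite (\<Phi> N)" and ne: "\<And>N. \<Phi> N \<noteq> {}"
    using assms(1) unfolding folner_def by auto
  have cpos: "\<And>N. 0 < real (card (\<Phi> N))" using fin ne by (simp add: card_gt_0_iff)
  have L2d: "\<And>k i. (\<lambda>n. F k n - F i n) \<in> L2 \<Phi>" using L2_diff assms(2) by blast
  have fc: "(\<lambda>N. 1 / real (card (\<Phi> N))) \<longlonglongrightarrow> 0" by (rule folner_card[OF assms(1)])
  define D where "D k p = (\<Sum>n\<in>(\<Union>N'\<in>{..p}. \<Phi> N'). \<Sum>l\<le>k. \<Sum>i\<le>k. (cmod (F l n - F i n))\<^sup>2)" for k p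
  define B where "B k i = real_of_ereal (besic_sq \<Phi> (\<lambda>n. F k n - F i n))" for k i
  define Q where "Q k p N \<longleftrightarrow> p < N \<and> D k p / real (card (\<Phi> N)) \<le> 1 / (real k + 1) \<and>
      (\<forall>i\<le>k. avg \<Phi> (\<lambda>n. F k n - F i n) N \<le> B k i + 1 / (real k + 1))" for k p N
  have exQ: "\<exists>N. Q k p N" for k p
  proof -
    have e1: "eventually (\<lambda>N. p < N) sequentially" by (rule eventually_gt_at_top)
    have "(\<lambda>N. D k p * (1 / real (card (\<Phi> N)))) \<longlonglongrightarrow> D k p * 0"
      by (intro tendsto_mult tendsto_const fc)
    then have "eventually (\<lambda>N. D k p * (1 / real (card (\<Phi> N))) < 1 / (real k + 1)) sequentially"
      by (rule order_tendstoD(2)) simp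
    then have e2: "eventually (\<lambda>N. D k p / real (card (\<Phi> N)) \<le> 1 / (real k + 1)) sequentially"
      by (auto elim: eventually_mono)
    have e3: "eventually (\<lambda>N. \<forall>i\<in>{..k}. avg \<Phi> (\<lambda>n. F k n - F i n) N \<le> B k i + 1 / (real k + 1)) sequentially"
      unfolding B_def by (rule eventually_ball_finite) (auto intro: L2_approx L2d)
    have "eventually (Q k p) sequentially" using e1 e2 e3 unfolding Q_def
      by eventually_elim auto
    then show ?thesis by (auto simp: eventually_sequentially)
  qed
  define \<sigma> :: "nat \<Rightarrow> nat" where "\<sigma> = rec_nat 0 (\<lambda>k p. SOME N. Q (Suc k) p N)"
  have \<sigma>S: "\<sigma> (Suc k) = (SOME N. Q (Suc k) (\<sigma> k) N)" for k by (simp add: \<sigma>_def)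
  have Q\<sigma>: "Q (Suc k) (\<sigma> k) (\<sigma> (Suc k))" for k unfolding \<sigma>S by (rule someI_ex[OF exQ])
  have smono: "strict_mono \<sigma>" unfolding strict_mono_Suc_iff using Q\<sigma> by (auto simp: Q_def)
  define W where "W k = (\<Union>N'\<in>{..\<sigma> k}. \<Phi> N')" for k
  have Wfin: "finite (W k)" for k using fin by (simp add: W_def)
  have Wmono: "W j \<subseteq> W k" if "j \<le> k" for j k
  proof -
    have "\<sigma> j \<le> \<sigma> k" using strict_mono_less_eq[OF smono] that by simp
    then show ?thesis unfolding W_def by (intro UN_mono) auto
  qed
  have \<Phi>W: "\<Phi> (\<sigma> k) \<subseteq> W k" for k by (auto simp: W_def)
  define \<kappa> where "\<kappa> n = (LEAST k. n \<in> W k)" for n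
  define f where "f n = (if \<exists>k. n \<in> W k then F (\<kappa> n) n else F 0 n)" for n
  have fW: "\<kappa> n \<le> k \<and> f n = F (\<kappa> n) n" if "n \<in> W k" for n k
    using that by (auto simp: f_def \<kappa>_def intro: Least_le)
  have fnew: "f n = F (Suc k) n" if a: "n \<in> \<Phi> (\<sigma> (Suc k))" "n \<notin> W k" for n k
  proof -
    have nW: "n \<in> W (Suc k)" using \<Phi>W a by blast
    have "\<kappa> n = Suc k" unfolding \<kappa>_def
    proof (rule Least_equality)
      show "n \<in> W (Suc k)" by (rule nW)
      fix j assume j: "n \<in> W j"
      show "Suc k \<le> j"
      proof (rule ccontr)
        assume "\<not> Suc k \<le> j"
        then have "W j \<subseteq> W k" by (intro Wmono) auto
        with j a show False by blast
      qed
    qed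
    then show ?thesis using fW[OF nW] by simp
  qed
  have est: "avg (\<Phi> \<circ> \<sigma>) (\<lambda>n. f n - F i n) (Suc k) \<le> 1 / (real (Suc k) + 1) + (B (Suc k) i + 1 / (real (Suc k) + 1))"
    if i: "i \<le> Suc k" for i k
  proof -
    let ?K = "Suc k"
    let ?S = "\<Phi> (\<sigma> ?K)"
    let ?c = "real (card ?S)"
    let ?g = "\<lambda>n. (cmod (f n - F i n))\<^sup>2"
    let ?h = "\<lambda>n. (cmod (F ?K n - F i n))\<^sup>2"
    have split: "sum ?g ?S = sum ?g (?S \<inter> W k) + sum ?g (?S - W k)" by (rule sum.Int_Diff[OF fin])
    have a1: "sum ?g (?S \<inter> W k) \<le> D ?K (\<sigma> k)"
    proof -
      have "sum ?g (?S \<inter> W k) \<le> (\<Sum>n\<in>?S \<inter> W k. \<Sum>l\<le>?K. \<Sum>i'\<le>?K. (cmod (F l n - F i' n))\<^sup>2)"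
      proof (rule sum_mono)
        fix n assume n: "n \<in> ?S \<inter> W k"
        obtain l where l: "l \<le> k" "f n = F l n" using fW n by blast
        have "?g n = (cmod (F l n - F i n))\<^sup>2" using l by simp
        also have "\<dots> \<le> (\<Sum>i'\<le>?K. (cmod (F l n - F i' n))\<^sup>2)"
          using member_le_sum[of i "{..?K}" "\<lambda>i'. (cmod (F l n - F i' n))\<^sup>2"] i by simp
        also have "\<dots> \<le> (\<Sum>l'\<le>?K. \<Sum>i'\<le>?K. (cmod (F l' n - F i' n))\<^sup>2)"
          using member_le_sum[of l "{..?K}" "\<lambda>l'. \<Sum>i'\<le>?K. (cmod (F l' n - F i' n))\<^sup>2"] l(1)
          by (simp add: sum_nonneg)
        finally show "?g n \<le> (\<Sum>l\<le>?K. \<Sum>i'\<le>?K. (cmod (F l n - F i' n))\<^sup>2)" .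
      qed
      also have "\<dots> \<le> (\<Sum>n\<in>W k. \<Sum>l\<le>?K. \<Sum>i'\<le>?K. (cmod (F l n - F i' n))\<^sup>2)"
        apply (rule sum_mono2[OF Wfin])
         apply blast
        apply (intro sum_nonneg)
        apply simp
        done
      finally show ?thesis by (simp add: D_def W_def)
    qed
    have a2: "sum ?g (?S - W k) \<le> sum ?h ?S"
    proof -
      have "sum ?g (?S - W k) = sum ?h (?S - W k)" by (rule sum.cong) (auto simp: fnew)
      also have "\<dots> \<le> sum ?h ?S" by (rule sum_mono2[OF fin]) auto
      finally show ?thesis .
    qed
    have q1: "D ?K (\<sigma> k) / ?c \<le> 1 / (real ?K + 1)"
      and q2: "avg \<Phi> (\<lambda>n. F ?K n - F i n) (\<sigma> ?K) \<le> B ?K i + 1 / (real ?K + 1)"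
      using Q\<sigma>[of k] i unfolding Q_def by auto
    have "avg (\<Phi> \<circ> \<sigma>) (\<lambda>n. f n - F i n) ?K = sum ?g ?S / ?c" by (simp add: avg_def)
    also have "\<dots> \<le> (D ?K (\<sigma> k) + sum ?h ?S) / ?c"
      using split a1 a2 cpos[of "\<sigma> ?K"] by (intro divide_right_mono) auto
    also have "\<dots> = D ?K (\<sigma> k) / ?c + avg \<Phi> (\<lambda>n. F ?K n - F i n) (\<sigma> ?K)"
      by (simp add: avg_def add_divide_distrib)
    finally show ?thesis using q1 q2 by linarith
  qed
  have conv: "\<exists>M. \<forall>j\<ge>M. eventually (\<lambda>N. avg (\<Phi> \<circ> \<sigma>) (\<lambda>n. f n - F j n) N \<le> 2 * \<delta>\<^sup>2) sequentially"
    if \<delta>: "\<delta> > 0" for \<delta>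
  proof -
    obtain M where M: "\<forall>j\<ge>M. \<forall>k\<ge>M. besic_norm \<Phi> (\<lambda>n. F k n - F j n) \<le> \<delta>"
      using assms(3) \<delta> unfolding besic_cauchy_def by blast
    have "\<forall>j\<ge>M. eventually (\<lambda>N. avg (\<Phi> \<circ> \<sigma>) (\<lambda>n. f n - F j n) N \<le> 2 * \<delta>\<^sup>2) sequentially"
    proof (intro allI impI)
      fix j assume j: "M \<le> j"
      obtain N1 :: nat where N1: "2 / \<delta>\<^sup>2 < real N1" using reals_Archimedean2 by blast
      have "eventually (\<lambda>N. max (Suc j) (Suc N1) \<le> N) sequentially" by (rule eventually_ge_at_top)
      then show "eventually (\<lambda>N. avg (\<Phi> \<circ> \<sigma>) (\<lambda>n. f n - F j n) N \<le> 2 * \<delta>\<^sup>2) sequentially"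
      proof eventually_elim
        fix N assume N: "max (Suc j) (Suc N1) \<le> N"
        then obtain k where k: "N = Suc k" by (cases N) auto
        have "B N j = (besic_norm \<Phi> (\<lambda>n. F N n - F j n))\<^sup>2" using norm_sq[OF L2d] by (simp add: B_def)
        also have "\<dots> \<le> \<delta>\<^sup>2"
        proof (rule power_mono)
          show "besic_norm \<Phi> (\<lambda>n. F N n - F j n) \<le> \<delta>" using M j N by auto
          show "0 \<le> besic_norm \<Phi> (\<lambda>n. F N n - F j n)"
            unfolding besic_norm_def by (rule real_sqrt_ge_zero)
              (use besic_sq_nonneg[of \<Phi> "\<lambda>n. F N n - F j n"] in \<open>simp add: real_of_ereal_pos\<close>)
        qed
        finally have b: "B N j \<le> \<delta>\<^sup>2" .
        have d2: "0 < \<delta>\<^sup>2" using \<delta> by simp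
        have "real N1 \<le> real N" using N by simp
        then have "2 / \<delta>\<^sup>2 < real N + 1" using N1 by linarith
        then have "2 < (real N + 1) * \<delta>\<^sup>2" using d2 by (simp add: pos_divide_less_eq)
        then have r: "1 / (real N + 1) \<le> \<delta>\<^sup>2 / 2" by (simp add: field_simps)
        have "avg (\<Phi> \<circ> \<sigma>) (\<lambda>n. f n - F j n) N \<le> 1 / (real N + 1) + (B N j + 1 / (real N + 1))"
          using est[of j k] k N by simp
        then show "avg (\<Phi> \<circ> \<sigma>) (\<lambda>n. f n - F j n) N \<le> 2 * \<delta>\<^sup>2" using b r by linarith
      qed
    qed
    then show ?thesis by blast
  qed
  have fL2: "f \<in> L2 (\<Phi> \<circ> \<sigma>)"
  proof -
    obtain M where "\<forall>j\<ge>M. eventually (\<lambda>N. avg (\<Phi> \<circ> \<sigma>) (\<lambda>n. f n - F j n) N \<le> 2 * 1\<^sup>2) sequentially"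
      using conv[of 1] by auto
    then have e1: "eventually (\<lambda>N. avg (\<Phi> \<circ> \<sigma>) (\<lambda>n. f n - F M n) N \<le> 2) sequentially" by simp
    obtain C where "eventually (\<lambda>N. avg \<Phi> (F M) N \<le> C) sequentially" using L2_bound assms(2) by blast
    then obtain N0 where N0: "\<And>N. N \<ge> N0 \<Longrightarrow> avg \<Phi> (F M) N \<le> C" by (auto simp: eventually_sequentially)
    have e2: "eventually (\<lambda>N. avg (\<Phi> \<circ> \<sigma>) (F M) N \<le> C) sequentially"
      unfolding eventually_sequentially
    proof (intro exI allI impI)
      fix N assume "N0 \<le> N"
      then have "N0 \<le> \<sigma> N" using seq_suble[OF smono, of N] by linarith
      then show "avg (\<Phi> \<circ> \<sigma>) (F M) N \<le> C" using N0 by (simp add: avg_def)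
    qed
    from e1 e2 have "eventually (\<lambda>N. avg (\<Phi> \<circ> \<sigma>) f N \<le> 2 * 2 + 2 * C) sequentially"
    proof eventually_elim
      fix N assume h: "avg (\<Phi> \<circ> \<sigma>) (\<lambda>n. f n - F M n) N \<le> 2" "avg (\<Phi> \<circ> \<sigma>) (F M) N \<le> C"
      have "avg (\<Phi> \<circ> \<sigma>) (\<lambda>n. (f n - F M n) + F M n) N
            \<le> 2 * avg (\<Phi> \<circ> \<sigma>) (\<lambda>n. f n - F M n) N + 2 * avg (\<Phi> \<circ> \<sigma>) (\<lambda>n. F M n) N"
        by (rule avg_add)
      then show "avg (\<Phi> \<circ> \<sigma>) f N \<le> 2 * 2 + 2 * C" using h by simp
    qed
    then show ?thesis by (rule L2_I)
  qed
  have lim: "(\<lambda>j. besic_norm (\<Phi> \<circ> \<sigma>) (\<lambda>n. f n - F j n)) \<longlonglongrightarrow> 0"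
  proof (rule LIMSEQ_I)
    fix r :: real assume r: "0 < r"
    obtain M where M: "\<forall>j\<ge>M. eventually (\<lambda>N. avg (\<Phi> \<circ> \<sigma>) (\<lambda>n. f n - F j n) N \<le> 2 * (r/2)\<^sup>2) sequentially"
      using conv[of "r/2"] r by auto
    have "norm (besic_norm (\<Phi> \<circ> \<sigma>) (\<lambda>n. f n - F j n) - 0) < r" if j: "j \<ge> M" for j
    proof -
      let ?s = "besic_sq (\<Phi> \<circ> \<sigma>) (\<lambda>n. f n - F j n)"
      have le: "?s \<le> ereal (2 * (r/2)\<^sup>2)" using M j besic_sq_le by blast
      have "real_of_ereal ?s \<le> 2 * (r/2)\<^sup>2"
        using le besic_sq_nonneg[of "\<Phi> \<circ> \<sigma>" "\<lambda>n. f n - F j n"] by (cases ?s) auto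
      then have "besic_norm (\<Phi> \<circ> \<sigma>) (\<lambda>n. f n - F j n) \<le> sqrt (2 * (r/2)\<^sup>2)"
        unfolding besic_norm_def by simp
      also have "\<dots> < sqrt (r\<^sup>2)"
      proof (rule real_sqrt_less_mono)
        show "2 * (r/2)\<^sup>2 < r\<^sup>2" using r by (simp add: power_divide power2_eq_square)
      qed
      also have "\<dots> = r" using r by simp
      finally show ?thesis
        using besic_sq_nonneg[of "\<Phi> \<circ> \<sigma>" "\<lambda>n. f n - F j n"]
        by (simp add: besic_norm_def real_of_ereal_pos)
    qed
    then show "\<exists>no. \<forall>j\<ge>no. norm (besic_norm (\<Phi> \<circ> \<sigma>) (\<lambda>n. f n - F j n) - 0) < r" by blast
  qed
  have bnd: "\<forall>a b :: real. (\<forall>j n. F j n \<in> complex_of_real ` {a..b}) \<longrightarrow>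
                (\<forall>n. f n \<in> complex_of_real ` {a..b})"
    by (simp add: f_def)
  show ?thesis using smono fL2 lim bnd by blast
qed

end
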